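(* Let $\theta \in [0,1]$. Let $\mathfrak{A}$ be a unital $C^*$-algebra with identity $I$, and let $U, V \in \mathfrak{A}$ be unitaries such that $UV = \exp(2\pi i\theta) VU$. Then there exist symmetries $R_1,R_2,R_3,R_4$ in $M_2(\mathfrak{A})$ such that $\exp(\pi i \theta)\begin{bmatrix} I & 0 \\ 0 & I\end{bmatrix} = R_1R_2R_3R_4$.
   Context: A symmetry is a self-adjoint unitary. $M_2(\mathfrak{A})$ denotes the $C^*$-algebra of $2\times 2$ matrices with entries in $\mathfrak{A}$. *)

theory Defs
  imports Complex_Main
begin

class cstar_algebra = real_normed_algebra_1 + banach +
  fixes scaleC :: "complex \<Rightarrow> 'a \<Rightarrow> 'a"
    and adj :: "'a \<Rightarrow> 'a"
  assumes scaleC_of_real: "scaleC (complex_of_real r) x = scaleR r x"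
    and scaleC_add_right: "scaleC c (x + y) = scaleC c x + scaleC c y"
    and scaleC_add_left: "scaleC (c + d) x = scaleC c x + scaleC d x"
    and scaleC_scaleC: "scaleC c (scaleC d x) = scaleC (c * d) x"
    and scaleC_one: "scaleC 1 x = x"
    and norm_scaleC: "norm (scaleC c x) = cmod c * norm x"
    and scaleC_mult_left: "scaleC c x * y = scaleC c (x * y)"
    and scaleC_mult_right: "x * scaleC c y = scaleC c (x * y)"
    and adj_adj: "adj (adj x) = x"
    and adj_add: "adj (x + y) = adj x + adj y"
    and adj_scaleC: "adj (scaleC c x) = scaleC (cnj c) (adj x)"
    and adj_mult: "adj (x * y) = adj y * adj x"
    and cstar_identity: "norm (adj x * x) = (norm x)\<^sup>2"

definition unitary :: "'a::cstar_algebra \<Rightarrow> bool" where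
  "unitary u \<longleftrightarrow> adj u * u = 1 \<and> u * adj u = 1"

text \<open>2x2 matrices over A: M2 a b c d = [[a, b], [c, d]].\<close>

datatype 'a mat2 = M2 'a 'a 'a 'a

fun m2_mult :: "'a::cstar_algebra mat2 \<Rightarrow> 'a mat2 \<Rightarrow> 'a mat2" where
  "m2_mult (M2 a b c d) (M2 e f g h) =
     M2 (a * e + b * g) (a * f + b * h) (c * e + d * g) (c * f + d * h)"

fun m2_adj :: "'a::cstar_algebra mat2 \<Rightarrow> 'a mat2" where
  "m2_adj (M2 a b c d) = M2 (adj a) (adj c) (adj b) (adj d)"

definition m2_id :: "'a::cstar_algebra mat2" where
  "m2_id = M2 1 0 0 1"

fun m2_scaleC :: "complex \<Rightarrow> 'a::cstar_algebra mat2 \<Rightarrow> 'a mat2" where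
  "m2_scaleC z (M2 a b c d) = M2 (scaleC z a) (scaleC z b) (scaleC z c) (scaleC z d)"

definition m2_symmetry :: "'a::cstar_algebra mat2 \<Rightarrow> bool" where
  "m2_symmetry R \<longleftrightarrow> m2_adj R = R \<and> m2_mult (m2_adj R) R = m2_id \<and> m2_mult R (m2_adj R) = m2_id"

end

theory Submission
  imports Defs
begin

lemma adj_one: "adj (1::'a::cstar_algebra) = 1"
proof -
  have "adj (1::'a) = adj 1 * adj (adj 1)" by (simp add: adj_adj)
  also have "\<dots> = adj (adj 1 * 1)" by (rule adj_mult[symmetric])
  also have "\<dots> = 1" by (simp add: adj_adj)
  finally show ?thesis .
qed

lemma adj_zero: "adj (0::'a::cstar_algebra) = 0"
  using adj_add[of "0::'a" 0] by simp

lemma scaleC_zero: "scaleC c (0::'a::cstar_algebra) = 0"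
  using scaleC_add_right[of c "0::'a" 0] by simp

theorem proposition3p10:
  fixes \<theta> :: real and U V :: "'a::cstar_algebra"
  assumes "0 \<le> \<theta>" "\<theta> \<le> 1"
    and "unitary U" "unitary V"
    and "U * V = scaleC (exp (2 * pi * \<i> * complex_of_real \<theta>)) (V * U)"
  shows "\<exists>R1 R2 R3 R4 :: 'a mat2. m2_symmetry R1 \<and> m2_symmetry R2 \<and> m2_symmetry R3 \<and> m2_symmetry R4 \<and>
           m2_scaleC (exp (pi * \<i> * complex_of_real \<theta>)) m2_id
             = m2_mult R1 (m2_mult R2 (m2_mult R3 R4))"
proof -
  define l where "l = exp (pi * \<i> * complex_of_real \<theta>)"
  have l2: "exp (2 * pi * \<i> * complex_of_real \<theta>) = l * l"
    unfolding l_def by (simp add: exp_add[symmetric] algebra_simps)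
  have lc: "l = cis (pi * \<theta>)" unfolding l_def by (simp add: cis_conv_exp algebra_simps)
  have cl: "cnj l * l = 1"
    unfolding lc by (simp add: cis_cnj cis_mult)
  have cl': "l * cnj l = 1" using cl by (simp add: mult.commute)
  have comm: "U * V = scaleC (l * l) (V * U)" using assms(5) l2 by simp
  have uU: "adj U * U = 1" "U * adj U = 1" using assms(3) unfolding unitary_def by auto
  have uV: "adj V * V = 1" "V * adj V = 1" using assms(4) unfolding unitary_def by auto
  define W where "W = scaleC (cnj l) (adj U * adj V)"
  have Wa: "adj W = scaleC l (V * U)"
    unfolding W_def by (simp add: adj_scaleC adj_mult adj_adj)
  have WW1: "W * adj W = 1"
  proof -
    have "W * adj W = scaleC (cnj l * l) (adj U * adj V * (V * U))"
      unfolding Wa unfolding W_def by (simp add: scaleC_mult_left scaleC_mult_right scaleC_scaleC mult.commute)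
    also have "adj U * adj V * (V * U) = 1"
      by (simp add: mult.assoc uU uV flip: mult.assoc[of "adj V"])
    finally show ?thesis using cl by (simp add: scaleC_one)
  qed
  have WW2: "adj W * W = 1"
  proof -
    have "adj W * W = scaleC (l * cnj l) (V * U * (adj U * adj V))"
      unfolding Wa unfolding W_def by (simp add: scaleC_mult_left scaleC_mult_right scaleC_scaleC mult.commute)
    also have "V * U * (adj U * adj V) = 1"
      by (simp add: mult.assoc uU uV flip: mult.assoc[of U])
    finally show ?thesis using cl' by (simp add: scaleC_one)
  qed
  define R1 where "R1 = M2 0 (adj U) U (0::'a)"
  define R2 where "R2 = M2 0 1 1 (0::'a)"
  define R3 where "R3 = M2 0 (adj V) V (0::'a)"
  define R4 where "R4 = M2 0 W (adj W) (0::'a)"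
  have s1: "m2_symmetry R1" unfolding R1_def m2_symmetry_def m2_id_def
    by (simp add: adj_adj adj_zero uU)
  have s2: "m2_symmetry R2" unfolding R2_def m2_symmetry_def m2_id_def
    by (simp add: adj_one adj_zero)
  have s3: "m2_symmetry R3" unfolding R3_def m2_symmetry_def m2_id_def
    by (simp add: adj_adj adj_zero uV)
  have s4: "m2_symmetry R4" unfolding R4_def m2_symmetry_def m2_id_def
    by (simp add: adj_adj adj_zero WW1 WW2)
  have e1: "adj U * (adj V * adj W) = scaleC l 1"
  proof -
    have "adj U * (adj V * adj W) = scaleC l (adj U * (adj V * V) * U)"
      unfolding Wa by (simp add: scaleC_mult_right mult.assoc)
    also have "\<dots> = scaleC l 1" by (simp add: uV uU)
    finally show ?thesis .
  qed
  have e2: "U * (V * W) = scaleC l 1"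
  proof -
    have "U * (V * W) = scaleC (cnj l) (U * V * (adj U * adj V))"
      unfolding W_def by (simp add: scaleC_mult_right mult.assoc)
    also have "\<dots> = scaleC (cnj l * (l * l)) (V * (U * adj U) * adj V)"
      unfolding comm by (simp add: scaleC_mult_left scaleC_scaleC mult.assoc)
    also have "\<dots> = scaleC l 1"
      using cl by (simp add: uU uV mult.assoc[symmetric])
    finally show ?thesis .
  qed
  have "m2_scaleC l m2_id = m2_mult R1 (m2_mult R2 (m2_mult R3 R4))"
    unfolding R1_def R2_def R3_def R4_def m2_id_def
    by (simp add: e1 e2 scaleC_zero)
  then show ?thesis using s1 s2 s3 s4 unfolding l_def by blast
qed

end
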